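(* Work in the tabular setting with the definitions in the context, and assume the empirical dynamics is deterministic: there is a map $M:\mathcal S\times\mathcal A\to\mathcal S$ such that $M(s'\mid s,a)=\mathbb I[M(s,a)=s']$ for all $s,a,s'$. Define, for every $s$ appearing in $\mathcal D$, $$\pi^*(a\mid s)=\frac{1}{Z(s)}\exp\big(\alpha V(M(s,a))\big)\,\beta(a\mid s).$$ Then: (i) $\pi^*(\cdot\mid s)$ is a probability distribution on $\mathcal A$ for every $s\in\mathcal D$; (ii) both $\bar R(\pi)$ and $\bar R_1(\pi)$ attain their global maximum over all policies at $\pi=\pi^*$; (iii) $\operatorname{supp}(\pi^*(\cdot\mid s))\subseteq\operatorname{supp}(\beta(\cdot\mid s))$ for every $s\in\mathcal D$; and (iv) $N^*(\cdot\mid s)=M(\cdot\mid s,\pi^*(\cdot\mid s))$ for every $s\in\mathcal D$.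
   Context: Finite state space $\mathcal S$ and finite action space $\mathcal A$. $\mathcal D$ is a finite dataset of transitions $(s,a,s')$ (rewards irrelevant here); "$s\in\mathcal D$" means $s$ occurs as the first component of some transition. $\beta(a\mid s)$ is the empirical behavior policy (fraction of transitions from $s$ with action $a$). $M(s'\mid s,a)$ is the empirical dynamics model: the fraction of transitions from $(s,a)$ ending in $s'$ if $(s,a)$ occurs in $\mathcal D$, and $0$ otherwise. $N(s'\mid s)=\sum_a\beta(a\mid s)M(s'\mid s,a)$ is the empirical state-transition distribution. $V:\mathcal S\to\mathbb R$ is a fixed real function and $\alpha\ge 0$ a constant. $Z(s)=\sum_{s'}\exp(\alpha V(s'))N(s'\mid s)$ and $N^*(s'\mid s)=\frac{1}{Z(s)}\exp(\alpha V(s'))N(s'\mid s)$. A policy $\pi$ assigns a distribution $\pi(\cdot\mid s)$ on $\mathcal A$ to each state; $M(s'\mid s,\pi(\cdot\mid s)):=\sum_a\pi(a\mid s)M(s'\mid s,a)$. $\mathbb E_{(s,s')\sim\mathcal D}$ denotes the average over the transitions of $\mathcal D$ (equivalently $s$ drawn from the empirical state distribution and $s'\sim N(\cdot\mid s)$). The objectives (with $\log 0=-\infty$) are $$\bar R(\pi)=\mathbb E_{(s,s')\sim\mathcal D}\Big[\tfrac{\exp(\alpha V(s'))}{Z(s)}\log M(s'\mid s,\pi(\cdot\mid s))\Big],\qquad \bar R_1(\pi)=\mathbb E_{(s,s')\sim\mathcal D}\Big[\tfrac{\exp(\alpha V(s'))}{\exp(\alpha V(s))}\log M(s'\mid s,\pi(\cdot\mid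 s))\Big].$$ *)

theory Defs
  imports "HOL-Analysis.Analysis" "HOL-Library.Extended_Real"
begin

text \<open>Tabular setting. The dataset is a finite list of transitions (s, a, s');
  duplicates are allowed, expectations are averages over the list entries.\<close>

definition states_D :: "('s \<times> 'a \<times> 's) list \<Rightarrow> 's set" where
  "states_D D = (\<lambda>(s,a,s'). s) ` set D"

definition pairs_D :: "('s \<times> 'a \<times> 's) list \<Rightarrow> ('s \<times> 'a) set" where
  "pairs_D D = (\<lambda>(s,a,s'). (s,a)) ` set D"

definition cnt_s :: "('s \<times> 'a \<times> 's) list \<Rightarrow> 's \<Rightarrow> nat" where
  "cnt_s D s = length (filter (\<lambda>(x,y,z). x = s) D)"

definition cnt_sa :: "('s \<times> 'a \<times> 's) list \<Rightarrow> 's \<Rightarrow> 'a \<Rightarrow> nat" where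
  "cnt_sa D s a = length (filter (\<lambda>(x,y,z). x = s \<and> y = a) D)"

definition cnt_sas :: "('s \<times> 'a \<times> 's) list \<Rightarrow> 's \<Rightarrow> 'a \<Rightarrow> 's \<Rightarrow> nat" where
  "cnt_sas D s a s' = length (filter (\<lambda>(x,y,z). x = s \<and> y = a \<and> z = s') D)"

definition beta :: "('s \<times> 'a \<times> 's) list \<Rightarrow> 's \<Rightarrow> 'a \<Rightarrow> real" where
  "beta D s a = real (cnt_sa D s a) / real (cnt_s D s)"

definition Memp :: "('s \<times> 'a \<times> 's) list \<Rightarrow> 's \<Rightarrow> 'a \<Rightarrow> 's \<Rightarrow> real" where
  "Memp D s a s' = (if (s,a) \<in> pairs_D D
      then real (cnt_sas D s a s') / real (cnt_sa D s a) else 0)"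

definition Nemp :: "('s \<times> 'a::finite \<times> 's) list \<Rightarrow> 's \<Rightarrow> 's \<Rightarrow> real" where
  "Nemp D s s' = (\<Sum>a\<in>UNIV. beta D s a * Memp D s a s')"

definition Zf :: "('s::finite \<times> 'a::finite \<times> 's) list \<Rightarrow> ('s \<Rightarrow> real) \<Rightarrow> real \<Rightarrow> 's \<Rightarrow> real" where
  "Zf D V \<alpha> s = (\<Sum>s'\<in>UNIV. exp (\<alpha> * V s') * Nemp D s s')"

definition Nstar :: "('s::finite \<times> 'a::finite \<times> 's) list \<Rightarrow> ('s \<Rightarrow> real) \<Rightarrow> real \<Rightarrow> 's \<Rightarrow> 's \<Rightarrow> real" where
  "Nstar D V \<alpha> s s' = exp (\<alpha> * V s') * Nemp D s s' / Zf D V \<alpha> s"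

definition Mpol :: "('s \<times> 'a::finite \<times> 's) list \<Rightarrow> 's \<Rightarrow> ('a \<Rightarrow> real) \<Rightarrow> 's \<Rightarrow> real" where
  "Mpol D s p s' = (\<Sum>a\<in>UNIV. p a * Memp D s a s')"

definition is_policy :: "('s \<Rightarrow> 'a::finite \<Rightarrow> real) \<Rightarrow> bool" where
  "is_policy \<pi> \<longleftrightarrow> (\<forall>s. (\<forall>a. 0 \<le> \<pi> s a) \<and> (\<Sum>a\<in>UNIV. \<pi> s a) = 1)"

definition elog :: "real \<Rightarrow> ereal" where
  "elog x = (if x = 0 then - \<infinity> else ereal (ln x))"

definition ED :: "('s \<times> 'a \<times> 's) list \<Rightarrow> ('s \<times> 'a \<times> 's \<Rightarrow> ereal) \<Rightarrow> ereal" where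
  "ED D f = sum_list (map f D) / ereal (real (length D))"

definition Rbar :: "('s::finite \<times> 'a::finite \<times> 's) list \<Rightarrow> ('s \<Rightarrow> real) \<Rightarrow> real
                    \<Rightarrow> ('s \<Rightarrow> 'a \<Rightarrow> real) \<Rightarrow> ereal" where
  "Rbar D V \<alpha> \<pi> = ED D (\<lambda>(s,a,s').
      ereal (exp (\<alpha> * V s') / Zf D V \<alpha> s) * elog (Mpol D s (\<pi> s) s'))"

definition Rbar1 :: "('s::finite \<times> 'a::finite \<times> 's) list \<Rightarrow> ('s \<Rightarrow> real) \<Rightarrow> real
                    \<Rightarrow> ('s \<Rightarrow> 'a \<Rightarrow> real) \<Rightarrow> ereal" where
  "Rbar1 D V \<alpha> \<pi> = ED D (\<lambda>(s,a,s').
      ereal (exp (\<alpha> * V s') / exp (\<alpha> * V s)) * elog (Mpol D s (\<pi> s) s'))"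

end

theory Submission
  imports Defs
begin

definition cc :: "('s \<times> 'a \<times> 's) list \<Rightarrow> 's \<Rightarrow> 's \<Rightarrow> real" where
  "cc D s s' = real (length (filter (\<lambda>(x,y,z). x = s \<and> z = s') D))"

lemma cnt_sum: "(\<Sum>a\<in>(UNIV::'a::finite set). cnt_sas D s a s') = length (filter (\<lambda>(x,y,z). x = s \<and> z = s') D)"
proof (induction D)
  case Nil then show ?case by (simp add: cnt_sas_def)
next
  case (Cons t D)
  obtain x y z where t: "t = (x,y,z)" by (cases t) auto
  have "(\<Sum>a\<in>(UNIV::'a set). cnt_sas (t#D) s a s') =
     (\<Sum>a\<in>UNIV. (if x = s \<and> a = y \<and> z = s' then 1 else 0) + cnt_sas D s a s')"
    by (rule sum.cong) (auto simp: cnt_sas_def t)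
  also have "\<dots> = (if x = s \<and> z = s' then 1 else 0) + (\<Sum>a\<in>UNIV. cnt_sas D s a s')"
    by (simp add: sum.distrib)
  finally show ?case using Cons by (simp add: t)
qed

lemma notpair_sas: "(s,a) \<notin> pairs_D D \<Longrightarrow> cnt_sas D s a s' = 0"
  unfolding pairs_D_def cnt_sas_def by (force simp: filter_empty_conv)

lemma notpair_sa: "(s,a) \<notin> pairs_D D \<Longrightarrow> cnt_sa D s a = 0"
  unfolding pairs_D_def cnt_sa_def by (force simp: filter_empty_conv)

lemma pair_sa: "(s,a) \<in> pairs_D D \<Longrightarrow> cnt_sa D s a > 0"
  unfolding pairs_D_def cnt_sa_def by (force simp: filter_empty_conv)

lemma states_cnt: "s \<in> states_D D \<Longrightarrow> cnt_s D s > 0"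
  unfolding states_D_def cnt_s_def by (force simp: filter_empty_conv)

lemma cc_nonneg: "cc D s s' \<ge> 0" by (simp add: cc_def)

lemma cc_pos: "cc D s s' > 0 \<Longrightarrow> \<exists>a. (s,a,s') \<in> set D"
  unfolding cc_def by (force simp: filter_empty_conv)

lemma cc_pos_states: "cc D s s' > 0 \<Longrightarrow> s \<in> states_D D"
  using cc_pos[of D s s'] unfolding states_D_def by force

lemma in_cc_pos: "(s,a,s') \<in> set D \<Longrightarrow> cc D s s' > 0"
  unfolding cc_def by (force simp: filter_empty_conv)

lemma states_ex: "s \<in> states_D D \<Longrightarrow> \<exists>s'. cc D s s' > 0"
  unfolding states_D_def using in_cc_pos by fastforce

lemma Nemp_eq: "Nemp D s s' = cc D s s' / real (cnt_s D s)"
proof -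
  have "Nemp D s s' = (\<Sum>a\<in>UNIV. real (cnt_sas D s a s') / real (cnt_s D s))"
    unfolding Nemp_def
  proof (rule sum.cong)
    fix a assume "a \<in> (UNIV::'b set)"
    show "beta D s a * Memp D s a s' = real (cnt_sas D s a s') / real (cnt_s D s)"
    proof (cases "(s,a) \<in> pairs_D D")
      case True then show ?thesis using pair_sa[OF True] by (simp add: beta_def Memp_def)
    next
      case False then show ?thesis by (simp add: Memp_def notpair_sas)
    qed
  qed simp
  also have "\<dots> = cc D s s' / real (cnt_s D s)"
    unfolding sum_divide_distrib[symmetric] cc_def of_nat_sum[symmetric] cnt_sum ..
  finally show ?thesis .
qed

lemma Z_pos: "s \<in> states_D D \<Longrightarrow> Zf D V \<alpha> s > 0"
proof -
  assume s: "s \<in> states_D D"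
  obtain s' where c: "cc D s s' > 0" using states_ex[OF s] by blast
  have cn: "real (cnt_s D s) > 0" using states_cnt[OF s] by simp
  have nn: "\<forall>x\<in>UNIV. 0 \<le> exp (\<alpha> * V x) * Nemp D s x"
    using cn by (simp add: Nemp_eq cc_nonneg)
  have "0 < exp (\<alpha> * V s') * Nemp D s s'" using c cn by (simp add: Nemp_eq)
  also have "\<dots> \<le> Zf D V \<alpha> s" unfolding Zf_def
    by (rule member_le_sum) (use nn in auto)
  finally show ?thesis .
qed

lemma Nstar_sum: "s \<in> states_D D \<Longrightarrow> (\<Sum>s'\<in>UNIV. Nstar D V \<alpha> s s') = 1"
  using Z_pos[of s D V \<alpha>] unfolding Nstar_def
  by (simp add: sum_divide_distrib[symmetric] Zf_def[symmetric])

lemma Nstar_pos: "cc D s s' > 0 \<Longrightarrow> Nstar D V \<alpha> s s' > 0"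
  using Z_pos[OF cc_pos_states, of D s s' V \<alpha>] states_cnt[OF cc_pos_states, of D s s']
  by (simp add: Nstar_def Nemp_eq)

lemma Nstar_nonneg: "Nstar D V \<alpha> s s' \<ge> 0"
proof (cases "cc D s s' > 0")
  case True then show ?thesis using Nstar_pos[OF True, of V \<alpha>] by simp
next
  case False then have "cc D s s' = 0" using cc_nonneg[of D s s'] by simp
  then show ?thesis by (simp add: Nstar_def Nemp_eq)
qed

lemma Zalt:
  assumes det: "\<forall>s a s'. (s, a) \<in> pairs_D D \<longrightarrow> Memp D s a s' = (if m s a = s' then 1 else 0)"
  shows "Zf D V \<alpha> s = (\<Sum>a\<in>UNIV. beta D s a * exp (\<alpha> * V (m s a)))"
proof -
  have "Zf D V \<alpha> s = (\<Sum>s'\<in>UNIV. \<Sum>a\<in>UNIV. beta D s a * (exp (\<alpha> * V s') * Memp D s a s'))"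
    unfolding Zf_def Nemp_def by (simp add: sum_distrib_left mult.left_commute)
  also have "\<dots> = (\<Sum>a\<in>UNIV. \<Sum>s'\<in>UNIV. beta D s a * (exp (\<alpha> * V s') * Memp D s a s'))"
    by (rule sum.swap)
  also have "\<dots> = (\<Sum>a\<in>UNIV. beta D s a * (\<Sum>s'\<in>UNIV. exp (\<alpha> * V s') * Memp D s a s'))"
    by (simp add: sum_distrib_left)
  also have "\<dots> = (\<Sum>a\<in>UNIV. beta D s a * exp (\<alpha> * V (m s a)))"
  proof (rule sum.cong)
    fix a assume "a \<in> (UNIV :: 'b set)"
    show "beta D s a * (\<Sum>s'\<in>UNIV. exp (\<alpha> * V s') * Memp D s a s') = beta D s a * exp (\<alpha> * V (m s a))"
    proof (cases "(s,a) \<in> pairs_D D")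
      case True
      have M: "Memp D s a s' = (if m s a = s' then 1 else 0)" for s' using det True by blast
      have "(\<Sum>s'\<in>UNIV. exp (\<alpha> * V s') * Memp D s a s') = (\<Sum>s'\<in>UNIV. if m s a = s' then exp (\<alpha> * V s') else 0)"
        by (rule sum.cong) (auto simp: M)
      also have "\<dots> = exp (\<alpha> * V (m s a))" by (simp add: sum.delta')
      finally show ?thesis by simp
    next
      case False then show ?thesis by (simp add: beta_def notpair_sa)
    qed
  qed simp
  finally show ?thesis .
qed

lemma Mpol_star:
  assumes det: "\<forall>s a s'. (s, a) \<in> pairs_D D \<longrightarrow> Memp D s a s' = (if m s a = s' then 1 else 0)"
    and pistar_def: "\<forall>s a. \<pi>star s a = exp (\<alpha> * V (m s a)) * beta D s a / Zf D V \<alpha> s"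
  shows "Mpol D s (\<pi>star s) s' = Nstar D V \<alpha> s s'"
proof -
  have "Mpol D s (\<pi>star s) s' = (\<Sum>a\<in>UNIV. exp (\<alpha> * V s') * (beta D s a * Memp D s a s') / Zf D V \<alpha> s)"
    unfolding Mpol_def
  proof (rule sum.cong)
    fix a assume "a \<in> (UNIV :: 'b set)"
    show "\<pi>star s a * Memp D s a s' = exp (\<alpha> * V s') * (beta D s a * Memp D s a s') / Zf D V \<alpha> s"
    proof (cases "(s,a) \<in> pairs_D D")
      case True then show ?thesis using det pistar_def by simp
    next
      case False then show ?thesis by (simp add: Memp_def)
    qed
  qed simp
  also have "\<dots> = Nstar D V \<alpha> s s'"
    unfolding Nstar_def Nemp_def
    by (simp add: sum_divide_distrib[symmetric] sum_distrib_left)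
  finally show ?thesis .
qed

lemma Memp_nonneg: "Memp D s a s' \<ge> 0" by (simp add: Memp_def)

lemma Mpol_nonneg: "is_policy \<pi> \<Longrightarrow> Mpol D s (\<pi> s) s' \<ge> 0"
  unfolding Mpol_def is_policy_def by (auto intro!: sum_nonneg simp: Memp_nonneg)

lemma Mpol_sum:
  fixes D :: "('s::finite \<times> 'a::finite \<times> 's) list"
  assumes det: "\<forall>s a s'. (s, a) \<in> pairs_D D \<longrightarrow> Memp D s a s' = (if m s a = s' then 1 else 0)"
    and pol: "is_policy \<pi>"
  shows "(\<Sum>s'\<in>UNIV. Mpol D s (\<pi> s) s') \<le> 1"
proof -
  have le: "(\<Sum>s'\<in>UNIV. Memp D s a s') \<le> 1" for a
  proof (cases "(s,a) \<in> pairs_D D")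
    case True
    have "(\<Sum>s'\<in>UNIV. if m s a = s' then (1::real) else 0) = 1"
      using sum.delta'[of UNIV "m s a" "\<lambda>_. (1::real)"] by simp
    then show ?thesis using det True by simp
  next
    case False then show ?thesis by (simp add: Memp_def)
  qed
  have "(\<Sum>s'\<in>UNIV. Mpol D s (\<pi> s) s') = (\<Sum>a\<in>UNIV. \<pi> s a * (\<Sum>s'\<in>UNIV. Memp D s a s'))"
    unfolding Mpol_def by (simp add: sum_distrib_left, rule sum.swap)
  also have "\<dots> \<le> (\<Sum>a\<in>UNIV. \<pi> s a * 1)"
    by (rule sum_mono, rule mult_left_mono) (use le pol in \<open>auto simp: is_policy_def\<close>)
  also have "\<dots> = 1" using pol by (simp add: is_policy_def)
  finally show ?thesis .
qed

lemma sum_list_cc: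
  fixes f :: "'s::finite \<Rightarrow> 's \<Rightarrow> real" and D :: "('s \<times> 'a \<times> 's) list"
  shows "sum_list (map (\<lambda>(s,a,s'). f s s') D) = (\<Sum>s\<in>UNIV. \<Sum>s'\<in>UNIV. cc D s s' * f s s')"
proof (induction D)
  case Nil then show ?case by (simp add: cc_def)
next
  case (Cons t D)
  obtain x y z where t: "t = (x,y,z)" by (cases t) auto
  have "(\<Sum>s\<in>UNIV. \<Sum>s'\<in>UNIV. cc (t#D) s s' * f s s') =
        (\<Sum>s\<in>UNIV. \<Sum>s'\<in>UNIV. (if s = x then (if s' = z then f s s' else 0) else 0) + cc D s s' * f s s')"
    by (intro sum.cong refl) (auto simp: cc_def t algebra_simps)
  also have "\<dots> = f x z + (\<Sum>s\<in>UNIV. \<Sum>s'\<in>UNIV. cc D s s' * f s s')"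
  proof -
    have e: "(\<Sum>s'\<in>UNIV. if s' = z then f s s' else 0) = f s z" for s
      by (simp add: sum.delta)
    have "(\<Sum>s\<in>UNIV. \<Sum>s'\<in>UNIV. if s = x then (if s' = z then f s s' else 0) else 0)
        = (\<Sum>s\<in>UNIV. if s = x then f s z else 0)"
      by (rule sum.cong) (auto simp: e)
    also have "\<dots> = f x z" by (simp add: sum.delta)
    finally show ?thesis by (simp add: sum.distrib)
  qed
  finally show ?case using Cons by (simp add: t)
qed

lemma sum_list_ereal: "sum_list (map (\<lambda>t. ereal (g t)) D) = ereal (sum_list (map g D))"
  by (induction D) auto

lemma sum_list_not_inf: "(\<forall>x\<in>set xs. x \<noteq> (\<infinity>::ereal)) \<Longrightarrow> sum_list xs \<noteq> \<infinity>"
  by (induction xs) auto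

lemma sum_list_minf: "(\<forall>x\<in>set xs. x \<noteq> (\<infinity>::ereal)) \<Longrightarrow> -\<infinity> \<in> set xs \<Longrightarrow> sum_list xs = -\<infinity>"
proof (induction xs)
  case Nil then show ?case by simp
next
  case (Cons x xs)
  show ?case
  proof (cases "x = -\<infinity>")
    case True
    then show ?thesis using sum_list_not_inf[of xs] Cons.prems by simp
  next
    case False
    then show ?thesis using Cons by simp
  qed
qed

lemma gibbs_pt:
  fixes K q qs cw :: real
  assumes "0 \<le> K" "0 < q" "0 < qs" "cw = K*qs"
  shows "cw * ln q \<le> cw * ln qs + K*(q - qs)"
proof -
  have "ln q - ln qs = ln (q/qs)" using assms by (simp add: ln_div)
  also have "\<dots> \<le> q/qs - 1" using assms by (intro ln_le_minus_one) simp
  finally have "cw * (ln q - ln qs) \<le> cw * (q/qs - 1)"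
    using assms by (intro mult_left_mono) auto
  also have "\<dots> = K * (q - qs)" using assms by (simp add: field_simps)
  finally show ?thesis by (simp add: algebra_simps)
qed

lemma gen:
  fixes D :: "('s::finite \<times> 'a::finite \<times> 's) list"
    and k :: "'s \<Rightarrow> real" and q :: "'s \<Rightarrow> 's \<Rightarrow> real"
  assumes k: "\<forall>s\<in>states_D D. k s > 0" and qnn: "\<forall>s s'. q s s' \<ge> 0"
    and qsum: "\<forall>s. (\<Sum>s'\<in>UNIV. q s s') \<le> 1"
  shows "sum_list (map (\<lambda>(s,a,s'). ereal (exp (\<alpha>*V s') * k s) * elog (q s s')) D)
       \<le> sum_list (map (\<lambda>(s,a,s'). ereal (exp (\<alpha>*V s') * k s) * elog (Nstar D V \<alpha> s s')) D)"
proof -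
  let ?w = "\<lambda>s s'. exp (\<alpha>*V s') * k s"
  have instates: "(s,a,s') \<in> set D \<Longrightarrow> s \<in> states_D D" for s a s'
    unfolding states_D_def by force
  have wpos: "(s,a,s') \<in> set D \<Longrightarrow> ?w s s' > 0" for s a s'
    using k instates by simp
  have R: "sum_list (map (\<lambda>(s,a,s'). ereal (?w s s') * elog (Nstar D V \<alpha> s s')) D)
     = ereal (sum_list (map (\<lambda>(s,a,s'). ?w s s' * ln (Nstar D V \<alpha> s s')) D))"
  proof -
    have "map (\<lambda>(s,a,s'). ereal (?w s s') * elog (Nstar D V \<alpha> s s')) D
        = map (\<lambda>t. ereal ((\<lambda>(s,a,s'). ?w s s' * ln (Nstar D V \<alpha> s s')) t)) D"
    proof (rule map_cong[OF refl])
      fix t assume t: "t \<in> set D"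
      obtain s a s' where tt: "t = (s,a,s')" by (cases t) auto
      have "Nstar D V \<alpha> s s' > 0" by (intro Nstar_pos in_cc_pos) (use t tt in simp)
      then show "(\<lambda>(s,a,s'). ereal (?w s s') * elog (Nstar D V \<alpha> s s')) t
          = ereal ((\<lambda>(s,a,s'). ?w s s' * ln (Nstar D V \<alpha> s s')) t)"
        by (simp add: tt elog_def)
    qed
    then show ?thesis using sum_list_ereal by metis
  qed
  show ?thesis
  proof (cases "\<exists>s a s'. (s,a,s') \<in> set D \<and> q s s' = 0")
    case True
    then obtain s a s' where t: "(s,a,s') \<in> set D" "q s s' = 0" by blast
    have "sum_list (map (\<lambda>(s,a,s'). ereal (?w s s') * elog (q s s')) D) = -\<infinity>"
    proof (rule sum_list_minf)
      show "\<forall>x\<in>set (map (\<lambda>(s,a,s'). ereal (?w s s') * elog (q s s')) D). x \<noteq> \<infinity>"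
      proof
        fix x assume "x \<in> set (map (\<lambda>(s,a,s'). ereal (?w s s') * elog (q s s')) D)"
        then obtain s a s' where "(s,a,s') \<in> set D" "x = ereal (?w s s') * elog (q s s')" by auto
        then show "x \<noteq> \<infinity>" using wpos[of s a s'] by (auto simp: elog_def)
      qed
      show "-\<infinity> \<in> set (map (\<lambda>(s,a,s'). ereal (?w s s') * elog (q s s')) D)"
        using t wpos[OF t(1)] by (force simp: elog_def)
    qed
    then show ?thesis by simp
  next
    case False
    then have qpos: "(s,a,s') \<in> set D \<Longrightarrow> q s s' > 0" for s a s'
      using qnn by (metis less_eq_real_def)
    have L: "sum_list (map (\<lambda>(s,a,s'). ereal (?w s s') * elog (q s s')) D)
     = ereal (sum_list (map (\<lambda>(s,a,s'). ?w s s' * ln (q s s')) D))"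
    proof -
      have "map (\<lambda>(s,a,s'). ereal (?w s s') * elog (q s s')) D
          = map (\<lambda>t. ereal ((\<lambda>(s,a,s'). ?w s s' * ln (q s s')) t)) D"
      proof (rule map_cong[OF refl])
        fix t assume t: "t \<in> set D"
        obtain s a s' where tt: "t = (s,a,s')" by (cases t) auto
        have "q s s' > 0" using qpos t tt by blast
        then show "(\<lambda>(s,a,s'). ereal (?w s s') * elog (q s s')) t
            = ereal ((\<lambda>(s,a,s'). ?w s s' * ln (q s s')) t)"
          by (simp add: tt elog_def)
      qed
      then show ?thesis using sum_list_ereal by metis
    qed
    define K where "K s = k s * real (cnt_s D s) * Zf D V \<alpha> s" for s
    have Knn: "K s \<ge> 0" for s
    proof (cases "s \<in> states_D D")
      case True
      have "k s > 0" using k True by blast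
      then show ?thesis using Z_pos[OF True, of V \<alpha>] by (simp add: K_def)
    next
      case False
      then have "cnt_s D s = 0" unfolding states_D_def cnt_s_def
        by (force simp: filter_empty_conv)
      then show ?thesis by (simp add: K_def)
    qed
    have pt: "cc D s s' * (?w s s' * ln (q s s')) \<le> cc D s s' * (?w s s' * ln (Nstar D V \<alpha> s s'))
               + K s * (q s s' - Nstar D V \<alpha> s s')" for s s'
    proof (cases "cc D s s' > 0")
      case True
      have st: "s \<in> states_D D" using cc_pos_states[OF True] .
      have Zp: "Zf D V \<alpha> s > 0" using Z_pos[OF st] .
      have cp: "real (cnt_s D s) > 0" using states_cnt[OF st] by simp
      have qp: "0 < q s s'" using cc_pos[OF True] qpos by blast
      have eq: "cc D s s' * ?w s s' = K s * Nstar D V \<alpha> s s'"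
        using Zp cp by (simp add: K_def Nstar_def Nemp_eq field_simps)
      have g: "(cc D s s' * ?w s s') * ln (q s s') \<le> (cc D s s' * ?w s s') * ln (Nstar D V \<alpha> s s')
               + K s * (q s s' - Nstar D V \<alpha> s s')"
        by (rule gibbs_pt[OF Knn qp Nstar_pos[OF True] eq])
      then show ?thesis by (simp only: mult.assoc)
    next
      case False
      then have "cc D s s' = 0" using cc_nonneg[of D s s'] by simp
      then have "Nstar D V \<alpha> s s' = 0" by (simp add: Nstar_def Nemp_eq)
      then show ?thesis using \<open>cc D s s' = 0\<close> Knn[of s] qnn by simp
    qed
    have Ksum: "(\<Sum>s\<in>UNIV. \<Sum>s'\<in>UNIV. K s * (q s s' - Nstar D V \<alpha> s s')) \<le> 0"
    proof (rule sum_nonpos)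
      fix s :: 's
      show "(\<Sum>s'\<in>UNIV. K s * (q s s' - Nstar D V \<alpha> s s')) \<le> 0"
      proof (cases "s \<in> states_D D")
        case True
        have "(\<Sum>s'\<in>UNIV. K s * (q s s' - Nstar D V \<alpha> s s')) = K s * ((\<Sum>s'\<in>UNIV. q s s') - 1)"
          using Nstar_sum[OF True, of V \<alpha>] by (simp add: sum_distrib_left[symmetric] sum_subtractf)
        also have "\<dots> \<le> 0" using qsum Knn[of s] by (simp add: mult_nonneg_nonpos)
        finally show ?thesis .
      next
        case False
        then have "cnt_s D s = 0" unfolding states_D_def cnt_s_def
          by (force simp: filter_empty_conv)
        then show ?thesis by (simp add: K_def)
      qed
    qed
    have "sum_list (map (\<lambda>(s,a,s'). ?w s s' * ln (q s s')) D)
        \<le> sum_list (map (\<lambda>(s,a,s'). ?w s s' * ln (Nstar D V \<alpha> s s')) D)"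
    proof -
      have "sum_list (map (\<lambda>(s,a,s'). ?w s s' * ln (q s s')) D)
          = (\<Sum>s\<in>UNIV. \<Sum>s'\<in>UNIV. cc D s s' * (?w s s' * ln (q s s')))"
        by (rule sum_list_cc)
      also have "\<dots> \<le> (\<Sum>s\<in>UNIV. \<Sum>s'\<in>UNIV. cc D s s' * (?w s s' * ln (Nstar D V \<alpha> s s'))
               + K s * (q s s' - Nstar D V \<alpha> s s'))"
        by (intro sum_mono pt)
      also have "\<dots> = (\<Sum>s\<in>UNIV. \<Sum>s'\<in>UNIV. cc D s s' * (?w s s' * ln (Nstar D V \<alpha> s s')))
               + (\<Sum>s\<in>UNIV. \<Sum>s'\<in>UNIV. K s * (q s s' - Nstar D V \<alpha> s s'))"
        by (simp add: sum.distrib)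
      also have "\<dots> \<le> (\<Sum>s\<in>UNIV. \<Sum>s'\<in>UNIV. cc D s s' * (?w s s' * ln (Nstar D V \<alpha> s s')))"
        using Ksum by simp
      also have "\<dots> = sum_list (map (\<lambda>(s,a,s'). ?w s s' * ln (Nstar D V \<alpha> s s')) D)"
        by (rule sum_list_cc[symmetric])
      finally show ?thesis .
    qed
    then show ?thesis using L R by simp
  qed
qed

lemma ED_mono: "sum_list (map f D) \<le> sum_list (map g D) \<Longrightarrow> ED D f \<le> ED D g"
  unfolding ED_def by (cases "D = []") (auto intro!: ereal_divide_right_mono)

theorem proposition1:
  fixes D :: "('s::finite \<times> 'a::finite \<times> 's) list"
    and V :: "'s \<Rightarrow> real" and \<alpha> :: real
    and m :: "'s \<Rightarrow> 'a \<Rightarrow> 's"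
    and \<pi>star :: "'s \<Rightarrow> 'a \<Rightarrow> real"
  assumes alpha: "\<alpha> \<ge> 0"
    and det: "\<forall>s a s'. (s, a) \<in> pairs_D D \<longrightarrow> Memp D s a s' = (if m s a = s' then 1 else 0)"
    and pistar_def: "\<forall>s a. \<pi>star s a = exp (\<alpha> * V (m s a)) * beta D s a / Zf D V \<alpha> s"
  shows "(\<forall>s\<in>states_D D. (\<forall>a. 0 \<le> \<pi>star s a) \<and> (\<Sum>a\<in>UNIV. \<pi>star s a) = 1)
       \<and> (\<forall>\<pi>. is_policy \<pi> \<longrightarrow> Rbar D V \<alpha> \<pi> \<le> Rbar D V \<alpha> \<pi>star \<and> Rbar1 D V \<alpha> \<pi> \<le> Rbar1 D V \<alpha> \<pi>star)
       \<and> (\<forall>s\<in>states_D D. \<forall>a. \<pi>star s a \<noteq> 0 \<longrightarrow> beta D s a \<noteq> 0)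
       \<and> (\<forall>s\<in>states_D D. \<forall>s'. Nstar D V \<alpha> s s' = Mpol D s (\<pi>star s) s')"
proof (intro conjI)
  have beta_nn: "beta D s a \<ge> 0" for s a by (simp add: beta_def)
  show "\<forall>s\<in>states_D D. (\<forall>a. 0 \<le> \<pi>star s a) \<and> (\<Sum>a\<in>UNIV. \<pi>star s a) = 1"
  proof
    fix s assume s: "s \<in> states_D D"
    have Zp: "Zf D V \<alpha> s > 0" using Z_pos[OF s] .
    have "(\<Sum>a\<in>UNIV. \<pi>star s a) = (\<Sum>a\<in>UNIV. beta D s a * exp (\<alpha> * V (m s a))) / Zf D V \<alpha> s"
      using pistar_def by (simp add: sum_divide_distrib mult_ac)
    also have "\<dots> = 1" using Zalt[OF det, of V \<alpha> s] Zp by simp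
    finally show "(\<forall>a. 0 \<le> \<pi>star s a) \<and> (\<Sum>a\<in>UNIV. \<pi>star s a) = 1"
      using pistar_def Zp beta_nn by simp
  qed
  show "\<forall>s\<in>states_D D. \<forall>a. \<pi>star s a \<noteq> 0 \<longrightarrow> beta D s a \<noteq> 0"
    using pistar_def by simp
  have MS: "Mpol D s (\<pi>star s) s' = Nstar D V \<alpha> s s'" for s s'
    by (rule Mpol_star[OF det pistar_def])
  then show "\<forall>s\<in>states_D D. \<forall>s'. Nstar D V \<alpha> s s' = Mpol D s (\<pi>star s) s'" by simp
  show "\<forall>\<pi>. is_policy \<pi> \<longrightarrow> Rbar D V \<alpha> \<pi> \<le> Rbar D V \<alpha> \<pi>star \<and> Rbar1 D V \<alpha> \<pi> \<le> Rbar1 D V \<alpha> \<pi>star"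
  proof (intro allI impI conjI)
    fix \<pi> :: "'s \<Rightarrow> 'a \<Rightarrow> real" assume pol: "is_policy \<pi>"
    have qnn: "\<forall>s s'. Mpol D s (\<pi> s) s' \<ge> 0" using Mpol_nonneg[OF pol] by blast
    have qsum: "\<forall>s. (\<Sum>s'\<in>UNIV. Mpol D s (\<pi> s) s') \<le> 1" using Mpol_sum[OF det pol] by blast
    have k1: "\<forall>s\<in>states_D D. 1 / Zf D V \<alpha> s > 0" by (simp add: Z_pos)
    have k2: "\<forall>s\<in>states_D D. 1 / exp (\<alpha> * V s) > 0" by simp
    have e1: "(\<lambda>(s,a,s'). ereal (exp (\<alpha> * V s') / Zf D V \<alpha> s) * elog (Mpol D s (p s) s'))
       = (\<lambda>(s,a,s'). ereal (exp (\<alpha> * V s') * (1 / Zf D V \<alpha> s)) * elog (Mpol D s (p s) s'))"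
      for p :: "'s \<Rightarrow> 'a \<Rightarrow> real" by simp
    have e2: "(\<lambda>(s,a,s'). ereal (exp (\<alpha> * V s') / exp (\<alpha> * V s)) * elog (Mpol D s (p s) s'))
       = (\<lambda>(s,a,s'). ereal (exp (\<alpha> * V s') * (1 / exp (\<alpha> * V s))) * elog (Mpol D s (p s) s'))"
      for p :: "'s \<Rightarrow> 'a \<Rightarrow> real" by simp
    show "Rbar D V \<alpha> \<pi> \<le> Rbar D V \<alpha> \<pi>star"
      unfolding Rbar_def e1 unfolding MS
      by (rule ED_mono, rule gen[OF k1 qnn qsum])
    show "Rbar1 D V \<alpha> \<pi> \<le> Rbar1 D V \<alpha> \<pi>star"
      unfolding Rbar1_def e2 unfolding MS
      by (rule ED_mono, rule gen[OF k2 qnn qsum])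
  qed
qed

end
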